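(* Let $f=\prod_{i=1}^n(y-a_i)\in\overline K[y]$ be reduced ($a_i$ pairwise distinct), of degree $n\ge2$. Let $w=\sum_{i=1}^nw_i\varepsilon_i\in\overline{\mathcal F}$. Then every solution $(u,v)\in\overline{\mathcal E}\times\overline{\mathcal E}$, $u=\sum_iu_i\varepsilon_i$, of $uf'_x+vf'_y=wf$ satisfies $v=\sum_{i=1}^nu_ia'_i\varepsilon_i$ and, for $1\le i\le n$, $$w_i=\Bigl(\sum_{j\ne i}\frac{a'_i-a'_j}{a_i-a_j}\Bigr)u_i-\sum_{j\neq i}\frac{a'_i-a'_j}{a_i-a_j}\,u_j.$$
   Context: $\overline K=\bigcup_{d\ge1}\mathbf C[[x^{1/d}]][1/x]$, $'$ denotes $d/dx$ and $f'_x,f'_y$ partial derivatives (coefficientwise in $x$). $\overline{\mathcal E}$ is the $\overline K$-space of polynomials in $y$ of degree $<n$, with basis $\varepsilon_i=\prod_{j\ne i}(y-a_j)$; $\overline{\mathcal F}=\{\sum u_i\varepsilon_i:\sum u_i=0\}$, the polynomials of degree $<n-1$. *)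

theory Defs
  imports "HOL-Computational_Algebra.Polynomial" "HOL-Computational_Algebra.Formal_Laurent_Series"
begin

text \<open>Puiseux field representation: a finite family of elements of
  the union over d of C((x^(1/d))) lies in a single C((t)) with t = x^(1/d).
  The derivative d/dx on C((t)), t^d = x, is (1/d) t^(1-d) d/dt.\<close>
definition xderiv :: "nat \<Rightarrow> complex fls \<Rightarrow> complex fls" where
  "xderiv d g = fls_const (1 / of_nat d) * fls_X_intpow (1 - int d) * fls_deriv g"

definition pderiv_x :: "nat \<Rightarrow> complex fls poly \<Rightarrow> complex fls poly" where
  "pderiv_x d p = map_poly (xderiv d) p"

definition redpoly :: "nat \<Rightarrow> (nat \<Rightarrow> complex fls) \<Rightarrow> complex fls poly" where
  "redpoly n a = (\<Prod>i<n. [:- a i, 1:])"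

definition eps :: "nat \<Rightarrow> (nat \<Rightarrow> complex fls) \<Rightarrow> nat \<Rightarrow> complex fls poly" where
  "eps n a i = (\<Prod>j\<in>{..<n} - {i}. [:- a j, 1:])"

end

theory Submission
  imports Defs
begin

lemma xderiv_zero[simp]: "xderiv d 0 = 0" by (simp add: xderiv_def)
lemma xderiv_one[simp]: "xderiv d 1 = 0" by (simp add: xderiv_def)
lemma xderiv_add: "xderiv d (f + g) = xderiv d f + xderiv d g"
  by (simp add: xderiv_def algebra_simps)
lemma xderiv_minus: "xderiv d (- f) = - xderiv d f"
  by (simp add: xderiv_def algebra_simps)
lemma xderiv_mult: "xderiv d (f * g) = xderiv d f * g + f * xderiv d g"
  by (simp add: xderiv_def algebra_simps)
lemma xderiv_sum: "xderiv d (sum f S) = (\<Sum>i\<in>S. xderiv d (f i))"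
  by (simp add: xderiv_def fls_deriv_sum sum_distrib_left)

lemma coeff_pderiv_x: "coeff (pderiv_x d p) k = xderiv d (coeff p k)"
  by (simp add: pderiv_x_def coeff_map_poly)

lemma pderiv_x_mult: "pderiv_x d (p * q) = pderiv_x d p * q + p * pderiv_x d q"
  by (rule poly_eqI) (simp add: coeff_pderiv_x coeff_mult xderiv_sum xderiv_mult sum.distrib)

lemma pderiv_x_one[simp]: "pderiv_x d 1 = 0"
  by (rule poly_eqI) (simp add: coeff_pderiv_x coeff_1)

lemma pderiv_x_prod: "pderiv_x d (prod f (as)) = (\<Sum>a\<in>as. prod f (as - {a}) * pderiv_x d (f a))"
proof (induct as rule: infinite_finite_induct)
  case (insert a as)
  then have id: "prod f (insert a as) = f a * prod f as"
    "\<And>g. sum g (insert a as) = g a + sum g as"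
    "insert a as - {a} = as"
    by auto
  have "prod f (insert a as - {b}) = f a * prod f (as - {b})" if "b \<in> as" for b
  proof -
    from \<open>a \<notin> as\<close> that have *: "insert a as - {b} = insert a (as - {b})"
      by auto
    show ?thesis
      unfolding * by (subst prod.insert) (use insert in auto)
  qed
  then show ?case
    unfolding id pderiv_x_mult insert(3) sum_distrib_left
    by (auto simp add: ac_simps intro!: sum.cong)
qed auto

lemma pderiv_x_lin: "pderiv_x d [:- c, 1:] = [:- xderiv d c:]"
  by (rule poly_eqI) (simp add: coeff_pderiv_x coeff_pCons xderiv_minus split: nat.split)


definition e2 :: "nat \<Rightarrow> (nat \<Rightarrow> complex fls) \<Rightarrow> nat \<Rightarrow> nat \<Rightarrow> complex fls poly" where
  "e2 n a i j = (\<Prod>k\<in>{..<n} - {i, j}. [:- a k, 1:])"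

lemma e2_sym: "e2 n a i j = e2 n a j i"
  by (simp add: e2_def insert_commute)

lemma redpoly_eq: "i < n \<Longrightarrow> redpoly n a = [:- a i, 1:] * eps n a i"
  unfolding redpoly_def eps_def by (simp add: prod.remove)

lemma eps_eq: "i < n \<Longrightarrow> j < n \<Longrightarrow> j \<noteq> i \<Longrightarrow> eps n a i = [:- a j, 1:] * e2 n a i j"
proof -
  assume h: "i < n" "j < n" "j \<noteq> i"
  have "eps n a i = [:- a j, 1:] * (\<Prod>k\<in>{..<n} - {i} - {j}. [:- a k, 1:])"
    unfolding eps_def using h by (subst prod.remove[of _ j]) auto
  also have "{..<n} - {i} - {j} = {..<n} - {i, j}" by auto
  finally show ?thesis by (simp add: e2_def)
qed

lemma eps_mult: "i < n \<Longrightarrow> j < n \<Longrightarrow> j \<noteq> i \<Longrightarrow> eps n a i * eps n a j = redpoly n a * e2 n a i j"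
proof -
  assume h: "i < n" "j < n" "j \<noteq> i"
  have 1: "eps n a i = [:- a j, 1:] * e2 n a i j" using eps_eq h by blast
  have 2: "eps n a j = [:- a i, 1:] * e2 n a i j" using eps_eq[of j n i a] h by (simp add: e2_sym)
  have 3: "redpoly n a = [:- a i, 1:] * ([:- a j, 1:] * e2 n a i j)" using redpoly_eq[OF h(1)] 1 by simp
  show ?thesis unfolding 1 2 3 by (simp only: ac_simps)
qed

lemma poly_eps_other: "i < n \<Longrightarrow> k < n \<Longrightarrow> i \<noteq> k \<Longrightarrow> poly (eps n a i) (a k) = 0"
  unfolding eps_def poly_prod by (rule prod_zero) auto

lemma poly_e2_other: "k < n \<Longrightarrow> k \<noteq> i \<Longrightarrow> k \<noteq> j \<Longrightarrow> poly (e2 n a i j) (a k) = 0"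
  unfolding e2_def poly_prod by (rule prod_zero) auto

lemma poly_eps_self: "inj_on a {..<n} \<Longrightarrow> k < n \<Longrightarrow> poly (eps n a k) (a k) \<noteq> 0"
  unfolding eps_def poly_prod by (auto simp: prod_zero_iff inj_on_eq_iff)

lemma poly_redpoly: "k < n \<Longrightarrow> poly (redpoly n a) (a k) = 0"
  using redpoly_eq[of k n a] by simp

lemma redpoly_nz: "redpoly n a \<noteq> 0"
  unfolding redpoly_def by (auto simp: prod_zero_iff)

lemma degree_eps: "degree (eps n a i) \<le> n - 1" if "i < n"
proof -
  have "degree (eps n a i) \<le> sum (degree \<circ> (\<lambda>j. [:- a j, 1:])) ({..<n} - {i})"
    unfolding eps_def by (rule degree_prod_sum_le) simp
  also have "\<dots> = card ({..<n} - {i})" by simp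
  also have "\<dots> = n - 1" using that by simp
  finally show ?thesis .
qed

lemma degree_comb: "i0 < n \<Longrightarrow> degree (\<Sum>i<n. smult (c i) (eps n a i)) < n"
proof -
  assume "i0 < n"
  have "degree (\<Sum>i<n. smult (c i) (eps n a i)) \<le> n - 1"
    apply (rule degree_sum_le, simp)
    apply (rule order.trans[OF degree_smult_le])
    apply (rule degree_eps) by simp
  then show ?thesis using \<open>i0 < n\<close> by linarith
qed

lemma poly_comb: "inj_on a {..<n} \<Longrightarrow> k < n \<Longrightarrow>
   poly (\<Sum>i<n. smult (c i) (eps n a i)) (a k) = c k * poly (eps n a k) (a k)"
  unfolding poly_sum
  apply (subst sum.remove[of _ k], simp, simp)
  apply (subst sum.neutral)
  apply (auto simp: poly_eps_other)
  done

lemma pderiv_redpoly: "pderiv (redpoly n a) = (\<Sum>i<n. smult 1 (eps n a i))"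
  unfolding redpoly_def pderiv_prod by (simp add: eps_def pderiv_pCons)

lemma pderiv_x_redpoly: "pderiv_x d (redpoly n a) = (\<Sum>i<n. smult (- xderiv d (a i)) (eps n a i))"
  unfolding redpoly_def pderiv_x_prod by (simp add: eps_def pderiv_x_lin)


theorem mainTheorem16:
  fixes d n :: nat and a u w :: "nat \<Rightarrow> complex fls" and v :: "complex fls poly"
  assumes "d \<ge> 1" and "n \<ge> 2"
    and "inj_on a {..<n}"
    and "(\<Sum>i<n. w i) = 0"
    and "degree v < n"
    and "(\<Sum>i<n. smult (u i) (eps n a i)) * pderiv_x d (redpoly n a)
           + v * pderiv (redpoly n a)
         = (\<Sum>i<n. smult (w i) (eps n a i)) * redpoly n a"
  shows "v = (\<Sum>i<n. smult (u i * xderiv d (a i)) (eps n a i))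
    \<and> (\<forall>i<n. w i =
          (\<Sum>j\<in>{..<n} - {i}. (xderiv d (a i) - xderiv d (a j)) / (a i - a j)) * u i
        - (\<Sum>j\<in>{..<n} - {i}. (xderiv d (a i) - xderiv d (a j)) / (a i - a j) * u j))"
proof -
  define D where "D = xderiv d"
  define E where "E = (\<lambda>i. eps n a i)"
  define e where "e = (\<lambda>k. poly (eps n a k) (a k))"
  define f where "f = redpoly n a"
  define U where "U = (\<Sum>i<n. smult (u i) (E i))"
  define W where "W = (\<Sum>i<n. smult (w i) (E i))"
  define V where "V = (\<Sum>i<n. smult (u i * D (a i)) (E i))"
  have inj: "inj_on a {..<n}" by fact
  have e_nz: "k < n \<Longrightarrow> e k \<noteq> 0" for k using poly_eps_self[OF inj] by (simp add: e_def)
  have fx: "pderiv_x d f = (\<Sum>i<n. smult (- D (a i)) (E i))"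
    by (simp add: f_def D_def E_def pderiv_x_redpoly)
  have fy: "pderiv f = (\<Sum>i<n. smult 1 (E i))"
    by (simp add: f_def E_def pderiv_redpoly)
  have hyp: "U * pderiv_x d f + v * pderiv f = W * f"
    using assms(6) by (simp add: U_def W_def E_def f_def)
  have pc: "poly (\<Sum>i<n. smult (c i) (E i)) (a k) = c k * e k" if "k < n" for c k
    using poly_comb[OF inj that] by (simp add: E_def e_def)
  have vk: "poly v (a k) = poly V (a k)" if k: "k < n" for k
  proof -
    have "poly (U * pderiv_x d f + v * pderiv f) (a k) = poly (W * f) (a k)" using hyp by simp
    moreover have "poly U (a k) = u k * e k" using pc[OF k] by (simp add: U_def)
    moreover have "poly (pderiv_x d f) (a k) = - D (a k) * e k" using pc[OF k] by (simp only: fx)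
    moreover have "poly (pderiv f) (a k) = 1 * e k" using pc[OF k] by (simp only: fy)
    moreover have "poly f (a k) = 0" using poly_redpoly[OF k] by (simp add: f_def)
    ultimately have "(u k * e k) * (- D (a k) * e k) + poly v (a k) * (1 * e k) = 0"
      by simp
    hence "(poly v (a k) - u k * D (a k) * e k) * e k = 0" by (simp add: algebra_simps)
    hence "poly v (a k) = u k * D (a k) * e k" using e_nz[OF k] by simp
    thus ?thesis using pc[OF k] by (simp add: V_def)
  qed
  have n0: "0 < n" using assms(2) by simp
  have card: "card (a ` {..<n}) = n" using card_image[OF inj] by simp
  have vV: "v = V"
    apply (rule poly_eqI_degree[where A = "a ` {..<n}"])
    using vk assms(5) degree_comb[OF n0] card by (auto simp: V_def E_def)
  define c where "c = (\<lambda>i j. u i * (D (a i) - D (a j)))"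
  define G where "G = (\<Sum>i<n. \<Sum>j\<in>{..<n} - {i}. smult (c i j) (e2 n a i j))"
  have "U * pderiv_x d f + V * pderiv f = (\<Sum>i<n. \<Sum>j<n. smult (c i j) (E i * E j))"
    unfolding U_def V_def fx fy sum_product sum.distrib[symmetric]
    by (intro sum.cong refl) (simp add: c_def mult_smult_left mult_smult_right smult_add_left[symmetric] algebra_simps)
  also have "\<dots> = (\<Sum>i<n. \<Sum>j\<in>{..<n} - {i}. smult (c i j) (E i * E j))"
  proof (rule sum.cong[OF refl])
    fix i assume "i \<in> {..<n}"
    then show "(\<Sum>j<n. smult (c i j) (E i * E j)) = (\<Sum>j\<in>{..<n} - {i}. smult (c i j) (E i * E j))"
      by (subst sum.remove[of _ i]) (auto simp: c_def)
  qed
  also have "\<dots> = (\<Sum>i<n. \<Sum>j\<in>{..<n} - {i}. smult (c i j) (f * e2 n a i j))"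
    by (intro sum.cong refl) (auto simp: E_def f_def eps_mult)
  also have "\<dots> = G * f"
    by (simp add: G_def sum_distrib_left mult_smult_right mult.commute[of _ f])
  finally have "W * f = G * f" using hyp vV by metis
  hence WG: "W = G" using redpoly_nz[of n a] by (simp add: f_def)
  have part2: "w k = (\<Sum>j\<in>{..<n} - {k}. (D (a k) - D (a j)) / (a k - a j)) * u k
        - (\<Sum>j\<in>{..<n} - {k}. (D (a k) - D (a j)) / (a k - a j) * u j)" if k: "k < n" for k
  proof -
    have ak: "j < n \<Longrightarrow> j \<noteq> k \<Longrightarrow> a k - a j \<noteq> 0" for j using inj k by (auto dest: inj_onD)
    have p1: "poly (e2 n a k j) (a k) = e k / (a k - a j)" if "j < n" "j \<noteq> k" for j
    proof -
      have "e k = (a k - a j) * poly (e2 n a k j) (a k)"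
      proof -
        have "e k = poly ([:- a j, 1:] * e2 n a k j) (a k)"
          unfolding e_def using eps_eq[OF k that, of a] by metis
        also have "\<dots> = (a k - a j) * poly (e2 n a k j) (a k)"
          by (simp only: poly_mult) simp
        finally show ?thesis .
      qed
      thus ?thesis using ak[OF that] by (simp add: field_simps)
    qed
    have p2: "poly (e2 n a i k) (a k) = e k / (a k - a i)" if "i < n" "i \<noteq> k" for i
      using p1[OF that] by (simp add: e2_sym)
    define P where "P = (\<lambda>i j. c i j * poly (e2 n a i j) (a k))"
    have "w k * e k = poly W (a k)" using pc[OF k] by (simp add: W_def)
    also have "\<dots> = (\<Sum>i<n. \<Sum>j\<in>{..<n} - {i}. P i j)"
      by (simp add: WG G_def poly_sum P_def)
    also have "\<dots> = (\<Sum>j\<in>{..<n} - {k}. P k j) + (\<Sum>i\<in>{..<n} - {k}. P i k)"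
    proof -
      have "(\<Sum>i<n. \<Sum>j\<in>{..<n} - {i}. P i j) = (\<Sum>j\<in>{..<n} - {k}. P k j) + (\<Sum>i\<in>{..<n} - {k}. \<Sum>j\<in>{..<n} - {i}. P i j)"
        using k by (subst sum.remove[of _ k]) auto
      also have "(\<Sum>i\<in>{..<n} - {k}. \<Sum>j\<in>{..<n} - {i}. P i j) = (\<Sum>i\<in>{..<n} - {k}. P i k)"
      proof (intro sum.cong refl)
        fix i assume i: "i \<in> {..<n} - {k}"
        show "(\<Sum>j\<in>{..<n} - {i}. P i j) = P i k"
          using i k by (subst sum.remove[of _ k]) (auto simp: P_def poly_e2_other intro!: sum.neutral)
      qed
      finally show ?thesis .
    qed
    also have "\<dots> = (\<Sum>j\<in>{..<n} - {k}. c k j * (e k / (a k - a j))) + (\<Sum>i\<in>{..<n} - {k}. c i k * (e k / (a k - a i)))"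
      by (intro arg_cong2[where f="(+)"] sum.cong refl) (auto simp: P_def p1 p2)
    also have "\<dots> = ((\<Sum>j\<in>{..<n} - {k}. (D (a k) - D (a j)) / (a k - a j)) * u k
        - (\<Sum>j\<in>{..<n} - {k}. (D (a k) - D (a j)) / (a k - a j) * u j)) * e k"
    proof -
      have "(\<Sum>i\<in>{..<n} - {k}. c i k * (e k / (a k - a i))) = - (\<Sum>j\<in>{..<n} - {k}. (D (a k) - D (a j)) / (a k - a j) * u j) * e k"
        by (simp add: sum_distrib_right sum_negf[symmetric] c_def, intro sum.cong refl) (auto simp: field_simps ak minus_divide_left)
      moreover have "(\<Sum>j\<in>{..<n} - {k}. c k j * (e k / (a k - a j))) = (\<Sum>j\<in>{..<n} - {k}. (D (a k) - D (a j)) / (a k - a j)) * u k * e k"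
        by (simp add: sum_distrib_right c_def, intro sum.cong refl) (simp add: field_simps)
      ultimately show ?thesis by (simp add: algebra_simps)
    qed
    finally show ?thesis using e_nz[OF k] by simp
  qed
  show ?thesis using vV part2 by (simp add: V_def E_def D_def)
qed

end
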